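(* For every $x\in\Sigma$ and $a,b\in\Sigma\setminus\{x\}$, $K_{x,a,b}\subseteq\Sigma^*\setminus L_{\mathrm{UNIQ}}$; that is, no string in $K_{x,a,b}$ is uniquely decodable from its bigram counts.
   Context: Let $\Sigma$ be a finite alphabet and $\$\notin\Sigma$ a delimiter symbol; $\Sigma_\$=\Sigma\cup\{\$\}$. The bigram map $\Phi$ sends a string $z\in\$\Sigma^*\$$ to the vector $\Phi(z)\in\mathbb{N}^{\Sigma_\$^2}$ whose $(i,j)$ entry is the number of positions at which the two-letter string $ij$ occurs as a contiguous factor of $z$ (counting overlaps). $L_{\mathrm{UNIQ}}$ is the set of $w\in\Sigma^*$ such that the only $z\in\$\Sigma^*\$$ with $\Phi(z)=\Phi(\$w\$)$ is $z=\$w\$$. For $x\in\Sigma$ write $\Sigma_{\neg x}=\Sigma\setminus\{x\}$. For $x\in\Sigma$ and $a,b\in\Sigma_{\neg x}$ (with $a=b$ allowed) define $I_{x,a,b}=\Sigma^*\,a\,x\,\Sigma_{\neg a}^*\,b\,\Sigma^*$, $J_{x,a,b}=\Sigma^*\,a\,\Sigma_{\neg x}^*\,b\,\Sigma^*$ (regular-expression notation), and $K_{x,a,b}=I_{x,a,b}\cap J_{x,a,b}$. *)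

theory Defs
  imports Main
begin

text \<open>The delimiter symbol is represented by None; letters of the alphabet by Some.
  A string over the extended alphabet is a list of type 'a option list.\<close>

definition delim :: "'a list \<Rightarrow> 'a option list" where
  "delim w = [None] @ map Some w @ [None]"

definition bigram :: "'b list \<Rightarrow> ('b \<times> 'b \<Rightarrow> nat)" where
  "bigram z = (\<lambda>(i, j). card {k. Suc k < length z \<and> z ! k = i \<and> z ! Suc k = j})"

definition L_UNIQ :: "'a set \<Rightarrow> 'a list set" where
  "L_UNIQ Sig = {w. set w \<subseteq> Sig \<and>
     (\<forall>u. set u \<subseteq> Sig \<longrightarrow> bigram (delim u) = bigram (delim w) \<longrightarrow> u = w)}"

definition I_lang :: "'a set \<Rightarrow> 'a \<Rightarrow> 'a \<Rightarrow> 'a \<Rightarrow> 'a list set" where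
  "I_lang Sig x a b = {p @ [a, x] @ v @ [b] @ s | p v s.
     set p \<subseteq> Sig \<and> set v \<subseteq> Sig - {a} \<and> set s \<subseteq> Sig}"

definition J_lang :: "'a set \<Rightarrow> 'a \<Rightarrow> 'a \<Rightarrow> 'a \<Rightarrow> 'a list set" where
  "J_lang Sig x a b = {p @ [a] @ v @ [b] @ s | p v s.
     set p \<subseteq> Sig \<and> set v \<subseteq> Sig - {x} \<and> set s \<subseteq> Sig}"

definition K_lang :: "'a set \<Rightarrow> 'a \<Rightarrow> 'a \<Rightarrow> 'a \<Rightarrow> 'a list set" where
  "K_lang Sig x a b = I_lang Sig x a b \<inter> J_lang Sig x a b"

end

theory Submission imports Defs "HOL-Library.Multiset" begin
fun pr :: "'b list \<Rightarrow> ('b \<times> 'b) list" where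
  "pr (a # b # r) = (a, b) # pr (b # r)"
| "pr _ = []"

lemma pr_zip: "pr z = zip z (tl z)"
  by (induction z rule: pr.induct) auto

lemma pr_split: "pr (x @ c # y) = pr (x @ [c]) @ pr (c # y)"
proof (induction x)
  case Nil then show ?case by simp
next
  case (Cons d x) then show ?case by (cases x) auto
qed

lemma bigram_pr: "bigram (z::'b list) = (\<lambda>q. count (mset (pr z)) q)"
proof
  fix q :: "'b \<times> 'b"
  obtain i j where q: "q = (i, j)" by force
  have "count (mset (pr z)) q = length (filter ((=) q) (zip z (tl z)))"
    by (simp add: pr_zip count_mset count_list_eq_length_filter)
  also have "\<dots> = card {k. k < length (zip z (tl z)) \<and> q = zip z (tl z) ! k}"
    by (simp add: length_filter_conv_card)
  also have "\<dots> = card {k. Suc k < length z \<and> z ! k = i \<and> z ! Suc k = j}"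
    by (rule arg_cong[where f=card]) (auto simp: q nth_tl)
  finally show "bigram z q = count (mset (pr z)) q"
    by (simp add: bigram_def q)
qed
lemma pmA: "R \<noteq> [] \<Longrightarrow> mset (pr (A @ c # R)) = mset (pr (A @ [c])) + mset (pr (c # R))"
  by (simp add: pr_split[of A c R])

lemma pmC: "R \<noteq> [] \<Longrightarrow> mset (pr (c # B @ d # R)) = mset (pr (c # B @ [d])) + mset (pr (d # R))"
  using pr_split[of "c # B" d R] by simp

lemma swap4: "mset (pr (A @ a # B @ b # C @ a # D @ b # E)) = mset (pr (A @ a # D @ b # C @ a # B @ b # E))"
  using pr_split[of "a#B" b E] pr_split[of "a#D" b E]
  by (simp add: pmA pmC del: append_Cons) (simp add: ac_simps)

lemma swap3: "mset (pr (A @ a # B @ a # D @ a # E)) = mset (pr (A @ a # D @ a # B @ a # E))"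
  using pr_split[of "a#B" a E] pr_split[of "a#D" a E]
  by (simp add: pmA pmC del: append_Cons) (simp add: ac_simps)
lemma decomp:
  assumes e: "p@a#x#v@b#s = p'@a#v'@b#s'" and "a\<noteq>x" "b\<noteq>x" "a\<notin>set v" "x\<notin>set v'"
  shows "(\<exists>t. p = p'@a#v'@b#t) \<or> (a=b \<and> p = p'@a#v') \<or> (\<exists>t. p' = p@a#x#v@b#t) \<or> (a = b \<and> p' = p@a#x#v)"
proof -
  from e obtain us where "(p = p' @ us \<and> us @ a#x#v@b#s = a#v'@b#s') \<or> (p @ us = p' \<and> a#x#v@b#s = us @ a#v'@b#s')"
    using append_eq_append_conv2[of p "a#x#v@b#s" p' "a#v'@b#s'"] by blast
  then show ?thesis
  proof
    assume h: "p = p' @ us \<and> us @ a#x#v@b#s = a#v'@b#s'"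
    show ?thesis
    proof (cases us)
      case Nil
      then show ?thesis using h assms by (cases v') auto
    next
      case (Cons c us')
      with h have p: "p = p' @ a # us'" and e2: "us' @ (a#x#v@b#s) = v' @ (b#s')" by auto
      from e2 obtain t where "(us' = v' @ t \<and> t @ a#x#v@b#s = b#s') \<or> (us' @ t = v' \<and> a#x#v@b#s = t @ b#s')"
        using append_eq_append_conv2[of us' "a#x#v@b#s" v' "b#s'"] by blast
      then show ?thesis
      proof
        assume h2: "us' = v' @ t \<and> t @ a#x#v@b#s = b#s'"
        then show ?thesis using p by (cases t) auto
      next
        assume h2: "us' @ t = v' \<and> a#x#v@b#s = t @ b#s'"
        show ?thesis
        proof (cases t)
          case Nil then show ?thesis using h2 p by auto
        next
          case (Cons c' t')
          with h2 have "x#v@b#s = t'@b#s'" "set t' \<subseteq> set v'" by auto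
          then show ?thesis using assms by (cases t') auto
        qed
      qed
    qed
  next
    assume h: "p @ us = p' \<and> a#x#v@b#s = us @ a#v'@b#s'"
    show ?thesis
    proof (cases us)
      case Nil
      then show ?thesis using h assms by (cases v') auto
    next
      case (Cons c us')
      with h have p: "p' = p @ a # us'" and e2: "x#v@b#s = us' @ a#v'@b#s'" by auto
      show ?thesis
      proof (cases us')
        case Nil then show ?thesis using e2 assms by auto
      next
        case (Cons c2 us'')
        with e2 have e3: "v@(b#s) = us''@(a#v'@b#s')" and p2: "p' = p@a#x#us''" using p by auto
        from e3 obtain t where "(v = us'' @ t \<and> t @ b#s = a#v'@b#s') \<or> (v @ t = us'' \<and> b#s = t @ a#v'@b#s')"
          using append_eq_append_conv2[of v "b#s" us'' "a#v'@b#s'"] by blast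
        then show ?thesis
        proof
          assume h2: "v = us'' @ t \<and> t @ b#s = a#v'@b#s'"
          then show ?thesis using p2 assms by (cases t) auto
        next
          assume h2: "v @ t = us'' \<and> b#s = t @ a#v'@b#s'"
          then show ?thesis using p2 by (cases t) auto
        qed
      qed
    qed
  qed
qed
lemma good4:
  assumes w: "w = A@a#B@b#C@a#D@b#E" and d: "take 1 (B@[b]) \<noteq> take 1 (D@[b])"
  shows "\<exists>u. set u = set w \<and> u \<noteq> w \<and> bigram (delim u) = bigram (delim w)"
proof (intro exI conjI)
  let ?u = "A@a#D@b#C@a#B@b#E"
  show "set ?u = set w" using w by auto
  show "?u \<noteq> w"
  proof
    assume "?u = w"
    hence eq: "D@b#C@a#B@b#E = B@b#C@a#D@b#E" using w by simp
    have "take 1 (D@b#C@a#B@b#E) = take 1 (B@b#C@a#D@b#E)" by (simp only: eq)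
    thus False using d by (cases B; cases D) auto
  qed
  have "mset (pr ((None # map Some A) @ Some a # map Some D @ Some b # map Some C @ Some a # map Some B @ Some b # (map Some E @ [None])))
      = mset (pr ((None # map Some A) @ Some a # map Some B @ Some b # map Some C @ Some a # map Some D @ Some b # (map Some E @ [None])))"
    by (rule swap4)
  then show "bigram (delim ?u) = bigram (delim w)"
    unfolding bigram_pr delim_def w by simp
qed

lemma good3:
  assumes w: "w = A@a#B@a#D@a#E" and d: "take 1 (B@[a]) \<noteq> take 1 (D@[a])"
  shows "\<exists>u. set u = set w \<and> u \<noteq> w \<and> bigram (delim u) = bigram (delim w)"
proof (intro exI conjI)
  let ?u = "A@a#D@a#B@a#E"
  show "set ?u = set w" using w by auto
  show "?u \<noteq> w"
  proof
    assume "?u = w"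
    hence eq: "D@a#B@a#E = B@a#D@a#E" using w by simp
    have "take 1 (D@a#B@a#E) = take 1 (B@a#D@a#E)" by (simp only: eq)
    thus False using d by (cases B; cases D) auto
  qed
  have "mset (pr ((None # map Some A) @ Some a # map Some D @ Some a # map Some B @ Some a # (map Some E @ [None])))
      = mset (pr ((None # map Some A) @ Some a # map Some B @ Some a # map Some D @ Some a # (map Some E @ [None])))"
    by (rule swap3)
  then show "bigram (delim ?u) = bigram (delim w)"
    unfolding bigram_pr delim_def w by simp
qed

theorem lemma1:
  fixes Sig :: "'a set" and x a b :: 'a
  assumes "finite Sig"
    and "x \<in> Sig" and "a \<in> Sig - {x}" and "b \<in> Sig - {x}"
  shows "K_lang Sig x a b \<subseteq> {w. set w \<subseteq> Sig} - L_UNIQ Sig"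
proof
  fix w assume "w \<in> K_lang Sig x a b"
  then obtain p v s p' v' s' where w1: "w = p @ [a, x] @ v @ [b] @ s" and sv: "set p \<subseteq> Sig" "set v \<subseteq> Sig - {a}" "set s \<subseteq> Sig"
    and w2: "w = p' @ [a] @ v' @ [b] @ s'" and sv': "set v' \<subseteq> Sig - {x}"
    unfolding K_lang_def I_lang_def J_lang_def by blast
  have ax: "a \<noteq> x" "b \<noteq> x" "a \<notin> set v" "x \<notin> set v'" using assms sv sv' by auto
  have sw: "set w \<subseteq> Sig" using w1 sv assms by auto
  have ex: "\<exists>u. set u = set w \<and> u \<noteq> w \<and> bigram (delim u) = bigram (delim w)"
  proof -
    have e: "p@a#x#v@b#s = p'@a#v'@b#s'" using w1 w2 by simp
    have tk: "take 1 (v'@[b]) \<noteq> take 1 ((x#v)@[b])" using ax by (cases v') auto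
    from decomp[OF e ax] show ?thesis
    proof (elim disjE exE conjE)
      fix t assume "p = p'@a#v'@b#t"
      then have "w = p'@a#v'@b#t@a#(x#v)@b#s" using w1 by simp
      then show ?thesis by (rule good4[OF _ tk])
    next
      assume "a = b" "p = p'@a#v'"
      then have "w = p'@a#v'@a#(x#v)@a#s" using w1 by simp
      then show ?thesis using tk \<open>a = b\<close> good3 [of w p' a v' "x#v" s] by simp
    next
      fix t assume "p' = p@a#x#v@b#t"
      then have "w = p@a#(x#v)@b#t@a#v'@b#s'" using w2 by simp
      then show ?thesis by (rule good4[OF _ tk[symmetric]])
    next
      assume "a = b" "p' = p@a#x#v"
      then have "w = p@a#(x#v)@a#v'@a#s'" using w2 by simp
      then show ?thesis using tk \<open>a = b\<close> good3 [of w p a "x#v" v' s'] by simp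
    qed
  qed
  then obtain u where u: "set u = set w" "u \<noteq> w" "bigram (delim u) = bigram (delim w)" by blast
  have "w \<notin> L_UNIQ Sig" using u sw unfolding L_UNIQ_def by auto
  then show "w \<in> {w. set w \<subseteq> Sig} - L_UNIQ Sig" using sw by simp
qed
end
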